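(* For every even integer $k\ge 4$, the graph $M_{\rm III}(k)$ is not word-representable.
   Context: For even $k\ge4$, $M_{\rm III}(k)$ is the split graph with clique $C=\{c_1,\dots,c_{k+1}\}$ and independent set $I=\{b,a_1,\dots,a_{k-1}\}$, where $N(b)=\{c_2,\dots,c_{k-1},c_{k+1}\}$ and $N(a_i)=\{c_i,c_{i+1}\}$ for $1\le i\le k-1$. A graph $G=(V,E)$ is word-representable if there is a word $w$ over $V$ such that for all distinct $a,b\in V$, $ab\in E$ iff $a$ and $b$ alternate in $w$ (i.e. the subsequence of $w$ formed by all occurrences of $a$ and $b$ is $abab\cdots$ or $baba\cdots$). *)

theory Defs
  imports Main
begin

definition alternate :: "'a list \<Rightarrow> 'a \<Rightarrow> 'a \<Rightarrow> bool" where
  "alternate w x y \<longleftrightarrow>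
     (let u = filter (\<lambda>z. z = x \<or> z = y) w in
        \<forall>i. Suc i < length u \<longrightarrow> u ! i \<noteq> u ! Suc i)"

(* Graph on vertex set V with (symmetric) adjacency relation E.
   w is a word over V (every vertex of V occurs in w, standard convention). *)
definition word_represents :: "'a set \<Rightarrow> ('a \<Rightarrow> 'a \<Rightarrow> bool) \<Rightarrow> 'a list \<Rightarrow> bool" where
  "word_represents V E w \<longleftrightarrow> set w = V \<and>
     (\<forall>a\<in>V. \<forall>b\<in>V. a \<noteq> b \<longrightarrow> (E a b \<longleftrightarrow> alternate w a b))"

definition word_representable :: "'a set \<Rightarrow> ('a \<Rightarrow> 'a \<Rightarrow> bool) \<Rightarrow> bool" where
  "word_representable V E \<longleftrightarrow> (\<exists>w. word_represents V E w)"

(* Vertices of M_III(k): clique vertices c_1..c_{k+1}, b, and a_1..a_{k-1}. *)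
datatype vtx = C nat | B | A nat

definition M3_V :: "nat \<Rightarrow> vtx set" where
  "M3_V k = C ` {1..k+1} \<union> {B} \<union> A ` {1..k-1}"

definition M3_Nb :: "nat \<Rightarrow> nat set" where
  "M3_Nb k = {2..k-1} \<union> {k+1}"

fun M3_adj0 :: "nat \<Rightarrow> vtx \<Rightarrow> vtx \<Rightarrow> bool" where
  "M3_adj0 k (C i) (C j) = (i \<noteq> j)"
| "M3_adj0 k B (C j) = (j \<in> M3_Nb k)"
| "M3_adj0 k (A i) (C j) = (j = i \<or> j = i + 1)"
| "M3_adj0 k _ _ = False"

definition M3_E :: "nat \<Rightarrow> vtx \<Rightarrow> vtx \<Rightarrow> bool" where
  "M3_E k u v \<longleftrightarrow> u \<in> M3_V k \<and> v \<in> M3_V k \<and> (M3_adj0 k u v \<or> M3_adj0 k v u)"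

end

theory Submission
  imports Defs
begin


definition cnt :: "'a list \<Rightarrow> 'a \<Rightarrow> nat" where
  "cnt l x = length (filter (\<lambda>z. z = x) l)"

lemma cnt_append[simp]: "cnt (l1 @ l2) x = cnt l1 x + cnt l2 x"
  by (simp add: cnt_def)
lemma cnt_Nil[simp]: "cnt [] x = 0" by (simp add: cnt_def)
lemma cnt_single[simp]: "cnt [a] x = (if a = x then 1 else 0)" by (simp add: cnt_def)

definition dd :: "'a \<Rightarrow> 'a \<Rightarrow> 'a list \<Rightarrow> int" where
  "dd x y l = int (cnt l x) - int (cnt l y)"

lemma dd_append[simp]: "dd x y (l1 @ l2) = dd x y l1 + dd x y l2"
  by (simp add: dd_def)
lemma dd_Nil[simp]: "dd x y [] = 0" by (simp add: dd_def)
lemma dd_single: "x \<noteq> y \<Longrightarrow> dd x y [a] = (if a = x then 1 else if a = y then -1 else 0)"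
  by (simp add: dd_def)

lemma alt_nth:
  assumes "set u \<subseteq> {x,y}" "x\<noteq>y" "\<forall>i. Suc i < length u \<longrightarrow> u!i \<noteq> u!Suc i"
  shows "i < length u \<Longrightarrow> u!i = (if even i then u!0 else (if u!0 = x then y else x))"
proof (induction i)
  case 0 then show ?case by simp
next
  case (Suc i)
  have a: "u!i \<in> {x,y}" "u!Suc i \<in> {x,y}" using Suc.prems assms(1) nth_mem
    by (metis Suc_lessD subset_iff)+
  have "u!i \<noteq> u!Suc i" using assms(3) Suc.prems by blast
  moreover have "u!0 \<in> {x,y}" using Suc.prems assms(1) nth_mem by (metis gr_zeroI not_less_zero subset_iff)
  ultimately show ?case using Suc a assms(2) by auto
qed

lemma alt_imp:
  assumes "set u \<subseteq> {x,y}" "x\<noteq>y" "\<forall>i. Suc i < length u \<longrightarrow> u!i \<noteq> u!Suc i"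
  shows "(\<forall>m. 0 \<le> dd x y (take m u) \<and> dd x y (take m u) \<le> 1) \<or>
         (\<forall>m. -1 \<le> dd x y (take m u) \<and> dd x y (take m u) \<le> 0)"
proof (cases "u = []")
  case True then show ?thesis by simp
next
  case False
  have u0: "u!0 \<in> {x,y}" using False assms(1) nth_mem by (metis length_greater_0_conv subset_iff)
  have key: "m \<le> length u \<Longrightarrow> dd x y (take m u) = (if u!0 = x then int (m mod 2) else - int (m mod 2))" for m
  proof (induction m)
    case 0 then show ?case by simp
  next
    case (Suc m)
    have "take (Suc m) u = take m u @ [u!m]" using Suc.prems by (simp add: take_Suc_conv_app_nth)
    moreover have "u!m = (if even m then u!0 else (if u!0 = x then y else x))"
      using alt_nth[OF assms] Suc.prems by simp
    ultimately show ?case using Suc u0 assms(2) by (cases "even m") (auto simp: dd_single mod_Suc odd_iff_mod_2_eq_one)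
  qed
  have "dd x y (take m u) = (if u!0 = x then int (min m (length u) mod 2) else - int (min m (length u) mod 2))" for m
    using key[of "min m (length u)"] by (cases "m \<le> length u") (auto simp: min_def)
  then show ?thesis using u0 by (cases "u!0 = x") auto
qed

lemma imp_alt:
  assumes "x\<noteq>y" "set u \<subseteq> {x,y}"
    and "(\<forall>m. 0 \<le> dd x y (take m u) \<and> dd x y (take m u) \<le> 1) \<or>
         (\<forall>m. -1 \<le> dd x y (take m u) \<and> dd x y (take m u) \<le> 0)"
  shows "\<forall>i. Suc i < length u \<longrightarrow> u!i \<noteq> u!Suc i"
proof (intro allI impI notI)
  fix i assume i: "Suc i < length u" and eq: "u!i = u!Suc i"
  have t1: "take (Suc i) u = take i u @ [u!i]" using i by (simp add: take_Suc_conv_app_nth)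
  have t2: "take (Suc (Suc i)) u = take (Suc i) u @ [u!Suc i]" using i by (simp add: take_Suc_conv_app_nth)
  have ui: "u!i \<in> {x,y}" using i assms(2) nth_mem by (metis Suc_lessD subset_iff)
  have d1: "dd x y (take (Suc i) u) = dd x y (take i u) + dd x y [u!i]" using t1 by simp
  have d2: "dd x y (take (Suc (Suc i)) u) = dd x y (take i u) + 2 * dd x y [u!i]"
    using t1 t2 eq dd_append[of x y "take i u @ [u!i]" "[u!i]"] by simp
  from assms(3) show False
  proof
    assume h: "\<forall>m. 0 \<le> dd x y (take m u) \<and> dd x y (take m u) \<le> 1"
    show False using h[rule_format, of i] h[rule_format, of "Suc i"] h[rule_format, of "Suc (Suc i)"] d1 d2 ui assms(1)
      by (auto simp: dd_single)
  next
    assume h: "\<forall>m. -1 \<le> dd x y (take m u) \<and> dd x y (take m u) \<le> 0"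
    show False using h[rule_format, of i] h[rule_format, of "Suc i"] h[rule_format, of "Suc (Suc i)"] d1 d2 ui assms(1)
      by (auto simp: dd_single)
  qed
qed

lemma cnt_filter: "P x \<Longrightarrow> cnt (filter P l) x = cnt l x"
  by (simp add: cnt_def filter_filter) (metis (mono_tags, lifting) filter_cong)

lemma filter_take_prefix: "filter P (take n w) = take (length (filter P (take n w))) (filter P w)"
proof -
  have "filter P w = filter P (take n w) @ filter P (drop n w)"
    by (metis append_take_drop_id filter_append)
  then show ?thesis by (metis append_eq_conv_conj)
qed

lemma take_filter_ex: "\<exists>n. take m (filter P w) = filter P (take n w)"
proof (induction w arbitrary: m)
  case Nil then show ?case by simp
next
  case (Cons a w)
  show ?case
  proof (cases "P a")
    case True
    show ?thesis
    proof (cases m)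
      case 0 then show ?thesis by (intro exI[of _ 0]) simp
    next
      case (Suc m')
      obtain n where "take m' (filter P w) = filter P (take n w)" using Cons by blast
      then show ?thesis using True Suc by (intro exI[of _ "Suc n"]) simp
    qed
  next
    case False
    obtain n where "take m (filter P w) = filter P (take n w)" using Cons by blast
    then show ?thesis using False by (intro exI[of _ "Suc n"]) simp
  qed
qed

definition ltw :: "'a list \<Rightarrow> 'a \<Rightarrow> 'a \<Rightarrow> bool" where
  "ltw w x y \<longleftrightarrow> (\<forall>n. 0 \<le> dd x y (take n w) \<and> dd x y (take n w) \<le> 1)"

lemma dd_swap: "dd y x l = - dd x y l" by (simp add: dd_def)

lemma transfer_all:
  fixes Q :: "int \<Rightarrow> bool"
  assumes "x \<noteq> y"
  shows "(\<forall>n. Q (dd x y (take n w))) \<longleftrightarrow> (\<forall>m. Q (dd x y (take m (filter (\<lambda>z. z = x \<or> z = y) w))))"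
    (is "?L \<longleftrightarrow> ?R")
proof
  let ?P = "(\<lambda>z. z = x \<or> z = y)"
  have e: "dd x y (filter ?P l) = dd x y l" for l by (simp add: dd_def cnt_filter)
  assume ?L
  show ?R
  proof
    fix m
    obtain n where "take m (filter ?P w) = filter ?P (take n w)" using take_filter_ex by blast
    then show "Q (dd x y (take m (filter ?P w)))" using \<open>?L\<close> e by simp
  qed
next
  let ?P = "(\<lambda>z. z = x \<or> z = y)"
  have e: "dd x y (filter ?P l) = dd x y l" for l by (simp add: dd_def cnt_filter)
  assume ?R
  show ?L
  proof
    fix n
    have "dd x y (take n w) = dd x y (take (length (filter ?P (take n w))) (filter ?P w))"
      using e filter_take_prefix by metis
    then show "Q (dd x y (take n w))" using \<open>?R\<close> by simp
  qed
qed

lemma alt_char: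
  assumes "x \<noteq> y"
  shows "alternate w x y \<longleftrightarrow> ltw w x y \<or> ltw w y x"
proof -
  let ?u = "filter (\<lambda>z. z = x \<or> z = y) w"
  have su: "set ?u \<subseteq> {x,y}" by auto
  have "ltw w x y \<longleftrightarrow> (\<forall>m. 0 \<le> dd x y (take m ?u) \<and> dd x y (take m ?u) \<le> 1)"
    unfolding ltw_def using transfer_all[OF assms, of "\<lambda>d. 0 \<le> d \<and> d \<le> 1" w] by simp
  moreover have "ltw w y x \<longleftrightarrow> (\<forall>m. -1 \<le> dd x y (take m ?u) \<and> dd x y (take m ?u) \<le> 0)"
    unfolding ltw_def dd_swap[of y x] using transfer_all[OF assms, of "\<lambda>d. -1 \<le> d \<and> d \<le> 0" w] by auto
  ultimately show ?thesis unfolding alternate_def Let_def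
    using alt_imp[OF su assms] imp_alt[OF assms su] by blast
qed



abbreviation F :: "'a list \<Rightarrow> nat \<Rightarrow> 'a \<Rightarrow> int" where
  "F w n x \<equiv> int (cnt (take n w) x)"

lemma ltwD: "ltw w x y \<Longrightarrow> F w n y \<le> F w n x \<and> F w n x \<le> F w n y + 1"
  unfolding ltw_def dd_def by (erule allE[of _ n]) linarith
lemma ltwI:
  assumes "\<And>n. F w n y \<le> F w n x \<and> F w n x \<le> F w n y + 1"
  shows "ltw w x y"
  unfolding ltw_def dd_def
proof
  fix n
  show "0 \<le> F w n x - F w n y \<and> F w n x - F w n y \<le> 1" using assms[of n] by linarith
qed

lemma ltw_refl: "ltw w x x" by (rule ltwI) simp

lemma not_both:
  assumes "x \<in> set w" "x \<noteq> y" "ltw w x y" "ltw w y x"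
  shows False
proof -
  obtain i where i: "i < length w" "w!i = x" using assms(1) by (metis in_set_conv_nth)
  have "take (Suc i) w = take i w @ [x]" using i by (simp add: take_Suc_conv_app_nth)
  then have "F w (Suc i) x = F w i x + 1" "F w (Suc i) y = F w i y" using assms(2) by auto
  then show False using ltwD[OF assms(3), of i] ltwD[OF assms(4), of i]
     ltwD[OF assms(3), of "Suc i"] ltwD[OF assms(4), of "Suc i"] by linarith
qed

lemma ltw_trans:
  assumes "ltw w x y" "ltw w y z" "ltw w x z \<or> ltw w z x"
  shows "ltw w x z"
proof (rule ltwI)
  fix n
  show "F w n z \<le> F w n x \<and> F w n x \<le> F w n z + 1"
    using ltwD[OF assms(1), of n] ltwD[OF assms(2), of n] assms(3) ltwD[of w x z n] ltwD[of w z x n]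
    by linarith
qed

lemma pat1:
  assumes "ltw w a b" "ltw w b c" "ltw w c d" "ltw w a d"
    "ltw w v a \<or> ltw w a v" "ltw w v c \<or> ltw w c v"
    "\<not>(ltw w v b \<or> ltw w b v)" "\<not>(ltw w v d \<or> ltw w d v)"
    "\<not>(ltw w v a \<and> ltw w a v)"
  shows False
proof -
  note h = ltwD[OF assms(1)] ltwD[OF assms(2)] ltwD[OF assms(3)] ltwD[OF assms(4)]
  consider "ltw w v a" "ltw w v c" | "ltw w v a" "ltw w c v" | "ltw w a v" "ltw w v c" | "ltw w a v" "ltw w c v"
    using assms(5,6) by blast
  then show False
  proof cases
    case 1
    have "ltw w v b"
    proof (rule ltwI)
      fix n
      show "F w n b \<le> F w n v \<and> F w n v \<le> F w n b + 1"
        using ltwD[OF assms(1), of n] ltwD[OF assms(2), of n] ltwD[OF assms(3), of n] ltwD[OF assms(4), of n]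
          ltwD[OF 1(1), of n] ltwD[OF 1(2), of n] by linarith
    qed
    then show False using assms(7) by blast
  next
    case 2
    have "ltw w a v"
    proof (rule ltwI)
      fix n
      show "F w n v \<le> F w n a \<and> F w n a \<le> F w n v + 1"
        using ltwD[OF assms(1), of n] ltwD[OF assms(2), of n] ltwD[OF assms(3), of n] ltwD[OF assms(4), of n]
          ltwD[OF 2(1), of n] ltwD[OF 2(2), of n] by linarith
    qed
    then show False using assms(9) 2 by blast
  next
    case 3
    have "ltw w v d"
    proof (rule ltwI)
      fix n
      show "F w n d \<le> F w n v \<and> F w n v \<le> F w n d + 1"
        using ltwD[OF assms(1), of n] ltwD[OF assms(2), of n] ltwD[OF assms(3), of n] ltwD[OF assms(4), of n]
          ltwD[OF 3(1), of n] ltwD[OF 3(2), of n] by linarith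
    qed
    then show False using assms(8) by blast
  next
    case 4
    have "ltw w b v"
    proof (rule ltwI)
      fix n
      show "F w n v \<le> F w n b \<and> F w n b \<le> F w n v + 1"
        using ltwD[OF assms(1), of n] ltwD[OF assms(2), of n] ltwD[OF assms(3), of n] ltwD[OF assms(4), of n]
          ltwD[OF 4(1), of n] ltwD[OF 4(2), of n] by linarith
    qed
    then show False using assms(7) by blast
  qed
qed

lemma pat2:
  assumes "ltw w a b" "ltw w b c" "ltw w c d" "ltw w a d"
    "ltw w v b \<or> ltw w b v" "ltw w v d \<or> ltw w d v"
    "\<not>(ltw w v a \<or> ltw w a v)" "\<not>(ltw w v c \<or> ltw w c v)"
    "\<not>(ltw w v b \<and> ltw w b v)"
  shows False
proof -
  note h = ltwD[OF assms(1)] ltwD[OF assms(2)] ltwD[OF assms(3)] ltwD[OF assms(4)]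
  consider "ltw w v b" "ltw w v d" | "ltw w v b" "ltw w d v" | "ltw w b v" "ltw w v d" | "ltw w b v" "ltw w d v"
    using assms(5,6) by blast
  then show False
  proof cases
    case 1
    have "ltw w v c"
    proof (rule ltwI)
      fix n
      show "F w n c \<le> F w n v \<and> F w n v \<le> F w n c + 1"
        using ltwD[OF assms(1), of n] ltwD[OF assms(2), of n] ltwD[OF assms(3), of n] ltwD[OF assms(4), of n]
          ltwD[OF 1(1), of n] ltwD[OF 1(2), of n] by linarith
    qed
    then show False using assms(8) by blast
  next
    case 2
    have "ltw w b v"
    proof (rule ltwI)
      fix n
      show "F w n v \<le> F w n b \<and> F w n b \<le> F w n v + 1"
        using ltwD[OF assms(1), of n] ltwD[OF assms(2), of n] ltwD[OF assms(3), of n] ltwD[OF assms(4), of n]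
          ltwD[OF 2(1), of n] ltwD[OF 2(2), of n] by linarith
    qed
    then show False using assms(9) 2 by blast
  next
    case 3
    have "ltw w a v"
    proof (rule ltwI)
      fix n
      show "F w n v \<le> F w n a \<and> F w n a \<le> F w n v + 1"
        using ltwD[OF assms(1), of n] ltwD[OF assms(2), of n] ltwD[OF assms(3), of n] ltwD[OF assms(4), of n]
          ltwD[OF 3(1), of n] ltwD[OF 3(2), of n] by linarith
    qed
    then show False using assms(7) by blast
  next
    case 4
    have "ltw w c v"
    proof (rule ltwI)
      fix n
      show "F w n v \<le> F w n c \<and> F w n c \<le> F w n v + 1"
        using ltwD[OF assms(1), of n] ltwD[OF assms(2), of n] ltwD[OF assms(3), of n] ltwD[OF assms(4), of n]
          ltwD[OF 4(1), of n] ltwD[OF 4(2), of n] by linarith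
    qed
    then show False using assms(8) by blast
  qed
qed



definition bad :: "nat \<Rightarrow> (nat \<Rightarrow> nat) \<Rightarrow> nat set \<Rightarrow> bool" where
  "bad k f N \<longleftrightarrow> (\<exists>i1 i2 i3 i4. i1 \<in> {1..k+1} \<and> i2 \<in> {1..k+1} \<and> i3 \<in> {1..k+1} \<and> i4 \<in> {1..k+1} \<and>
     f i1 < f i2 \<and> f i2 < f i3 \<and> f i3 < f i4 \<and>
     ((i1 \<in> N \<and> i3 \<in> N \<and> i2 \<notin> N \<and> i4 \<notin> N) \<or> (i1 \<notin> N \<and> i3 \<notin> N \<and> i2 \<in> N \<and> i4 \<in> N)))"

definition sc :: "nat \<Rightarrow> nat \<Rightarrow> nat" where
  "sc k p = (if p = k then 0 else Suc p)"

lemma rot_bad: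
  assumes "k \<ge> 4" "j0 \<in> {1..k+1}" "j1 \<in> {1..k+1}" "j2 \<in> {1..k+1}" "j3 \<in> {1..k+1}"
    "f j0 \<le> k" "f j1 \<le> k" "f j2 \<le> k" "f j3 \<le> k"
    "sc k (f j0) = f j1" "sc k (f j1) = f j2" "sc k (f j2) = f j3"
    "j0 \<in> N \<longleftrightarrow> j2 \<in> N" "j1 \<in> N \<longleftrightarrow> j3 \<in> N" "j0 \<in> N \<longleftrightarrow> j1 \<notin> N"
  shows "bad k f N"
proof -
  have "(f j0<f j1\<and>f j1<f j2\<and>f j2<f j3) \<or> (f j1<f j2\<and>f j2<f j3\<and>f j3<f j0) \<or>
        (f j2<f j3 \<and> f j3<f j0 \<and> f j0<f j1) \<or> (f j3<f j0\<and>f j0<f j1\<and>f j1<f j2)"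
    using assms(1,6-12) unfolding sc_def by (auto split: if_splits)
  then show ?thesis unfolding bad_def using assms(2-5,13-15) by metis
qed

lemma adj_step:
  assumes "inj_on f {1..k+1}" "f ` {1..k+1} = {0..k}" "i \<in> {1..k+1}" "j \<in> {1..k+1}"
    "f i < f j" "\<not> bad k f {i,j}"
  shows "f j = Suc (f i) \<or> (f i = 0 \<and> f j = k)"
proof (rule ccontr)
  assume c: "\<not> ?thesis"
  have fj: "f j \<le> k" using assms(2,4) by auto
  have g: "f j \<ge> f i + 2" using c assms(5) by linarith
  obtain z where z: "z \<in> {1..k+1}" "f z = Suc (f i)"
    using assms(2) fj g by (metis atLeastAtMost_iff imageE le0 le_trans add_leD1 Suc_leI assms(5) less_imp_le_nat)
  have zn: "z \<notin> {i,j}" using z g by auto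
  have ij: "i \<noteq> j" using assms(5) by auto
  show False
  proof (cases "f i = 0")
    case False
    obtain z' where z': "z' \<in> {1..k+1}" "f z' = f i - 1"
      using assms(2) fj assms(5) by (metis (no_types, lifting) atLeastAtMost_iff diff_le_self imageE le0 le_trans less_imp_le_nat)
    have "z' \<notin> {i,j}" using z' False g by auto
    then have "bad k f {i,j}" unfolding bad_def
      using z z' zn assms(3,4) False g
      by (intro exI[of _ z'] exI[of _ i] exI[of _ z] exI[of _ j]) auto
    then show False using assms(6) by blast
  next
    case True
    then have "f j < k" using c fj by auto
    obtain z' where z': "z' \<in> {1..k+1}" "f z' = Suc (f j)"
      using assms(2) \<open>f j < k\<close> by (metis atLeastAtMost_iff imageE le0 Suc_leI)
    have "z' \<notin> {i,j}" using z' g by auto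
    then have "bad k f {i,j}" unfolding bad_def
      using z z' zn assms(3,4) g
      by (intro exI[of _ i] exI[of _ z] exI[of _ j] exI[of _ z']) auto
    then show False using assms(6) by blast
  qed
qed

lemma adj2:
  assumes "inj_on f {1..k+1}" "f ` {1..k+1} = {0..k}" "i \<in> {1..k+1}" "Suc i \<in> {1..k+1}"
    "\<not> bad k f {i, Suc i}"
  shows "f (Suc i) = sc k (f i) \<or> f i = sc k (f (Suc i))"
proof -
  have ne: "f i \<noteq> f (Suc i)" using assms(1,3,4) by (metis inj_on_def n_not_Suc_n)
  have le: "f i \<le> k" "f (Suc i) \<le> k" using assms(2,3,4) by auto
  show ?thesis
  proof (cases "f i < f (Suc i)")
    case True
    then show ?thesis using adj_step[OF assms(1,2,3,4) True assms(5)] le unfolding sc_def by auto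
  next
    case False
    then have "f (Suc i) < f i" using ne by linarith
    moreover have "\<not> bad k f {Suc i, i}" using assms(5) by (simp add: insert_commute)
    ultimately show ?thesis using adj_step[OF assms(1,2,4,3)] le unfolding sc_def by auto
  qed
qed

lemma comb:
  assumes k4: "k \<ge> 4" and inj: "inj_on f {1..k+1}" and im: "f ` {1..k+1} = {0..k}"
    and ai: "\<forall>i\<in>{1..k-1}. \<not> bad k f {i, Suc i}"
    and bb: "\<not> bad k f (M3_Nb k)"
  shows False
proof -
  have fle: "j \<in> {1..k+1} \<Longrightarrow> f j \<le> k" for j using im by auto
  have finj: "i \<in> {1..k+1} \<Longrightarrow> j \<in> {1..k+1} \<Longrightarrow> f i = f j \<Longrightarrow> i = j" for i j
    using inj by (meson inj_on_def)
  have surj: "p \<le> k \<Longrightarrow> \<exists>j\<in>{1..k+1}. f j = p" for p using im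
    by (metis atLeastAtMost_iff imageE le0)
  have scle: "p \<le> k \<Longrightarrow> sc k p \<le> k" for p unfolding sc_def using k4 by auto
  have scfix: "sc k p \<noteq> p" for p unfolding sc_def using k4 by auto
  have scinj: "p \<le> k \<Longrightarrow> q \<le> k \<Longrightarrow> sc k p = sc k q \<Longrightarrow> p = q" for p q
    unfolding sc_def by (auto split: if_splits)
  define dir where "dir i = (f (Suc i) = sc k (f i))" for i
  have st: "i \<in> {1..k-1} \<Longrightarrow> dir i \<or> f i = sc k (f (Suc i))" for i
    unfolding dir_def using adj2[OF inj im, of i] ai by auto
  have cons: "i \<in> {1..k-2} \<Longrightarrow> dir (Suc i) = dir i" for i
  proof -
    assume i: "i \<in> {1..k-2}"
    have i1: "i \<in> {1..k-1}" "Suc i \<in> {1..k-1}" using i k4 by auto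
    have mi: "i \<in> {1..k+1}" "Suc (Suc i) \<in> {1..k+1}" using i k4 by auto
    then have ne: "f i \<noteq> f (Suc (Suc i))" using finj[of i "Suc (Suc i)"] by auto
    show ?thesis
    proof (cases "dir i")
      case True
      show ?thesis
      proof (rule ccontr)
        assume "dir (Suc i) \<noteq> dir i"
        then have "f (Suc i) = sc k (f (Suc (Suc i)))" using st[OF i1(2)] True by auto
        then have "sc k (f i) = sc k (f (Suc (Suc i)))" using True unfolding dir_def by simp
        then have "f i = f (Suc (Suc i))" using scinj[OF fle[OF mi(1)] fle[OF mi(2)]] by blast
        then show False using ne by blast
      qed
    next
      case False
      then have a: "f i = sc k (f (Suc i))" using st[OF i1(1)] by auto
      show ?thesis
      proof (rule ccontr)
        assume "dir (Suc i) \<noteq> dir i"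
        then have "dir (Suc i)" using False by auto
        then show False using a ne unfolding dir_def by auto
      qed
    qed
  qed
  have all: "i \<in> {1..k-1} \<Longrightarrow> dir i = dir 1" for i
  proof (induction i)
    case 0 then show ?case by simp
  next
    case (Suc i)
    show ?case
    proof (cases "i = 0")
      case True then show ?thesis by simp
    next
      case False
      then have "i \<in> {1..k-2}" using Suc.prems by auto
      then show ?thesis using cons Suc by auto
    qed
  qed
  have mem: "k \<notin> M3_Nb k" "Suc k \<in> M3_Nb k" "1 \<notin> M3_Nb k" "2 \<in> M3_Nb k"
    unfolding M3_Nb_def using k4 by auto
  have r: "1 \<in> {1..k+1}" "2 \<in> {1..k+1}" "k \<in> {1..k+1}" "Suc k \<in> {1..k+1}" using k4 by auto
  show False
  proof (cases "dir 1")
    case True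
    then have fw: "i \<in> {1..k-1} \<Longrightarrow> f (Suc i) = sc k (f i)" for i using all unfolding dir_def by blast
    obtain j where j: "j \<in> {1..k+1}" "f j = sc k (f (Suc k))" using surj scle fle r by blast
    have j1: "j = 1"
    proof (rule ccontr)
      assume "j \<noteq> 1"
      show False
      proof (cases "j = Suc k")
        case True then show False using j scfix by metis
      next
        case False
        then have "j - 1 \<in> {1..k-1}" using j \<open>j \<noteq> 1\<close> by auto
        moreover have "Suc (j-1) = j" using j \<open>j \<noteq> 1\<close> by auto
        ultimately have "f j = sc k (f (j-1))" using fw[of "j-1"] by simp
        have m1: "j - 1 \<in> {1..k+1}" "j - 1 \<noteq> Suc k" using \<open>j - 1 \<in> {1..k-1}\<close> by auto
        have "sc k (f (j-1)) = sc k (f (Suc k))" using \<open>f j = sc k (f (j-1))\<close> j by simp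
        then have e: "f (j-1) = f (Suc k)" using scinj[OF fle[OF m1(1)] fle[OF r(4)]] by blast
        show False using finj[OF m1(1) r(4) e] m1(2) by blast
      qed
    qed
    obtain j' where j': "j' \<in> {1..k+1}" "f j' = sc k (f k)" using surj scle fle r by blast
    have j'k: "j' = Suc k"
    proof (rule ccontr)
      assume nk: "j' \<noteq> Suc k"
      show False
      proof (cases "j' = 1")
        case True
        then have "sc k (f k) = sc k (f (Suc k))" using j' j j1 by simp
        then have "f k = f (Suc k)" using scinj[OF fle[OF r(3)] fle[OF r(4)]] by blast
        then show False using finj[OF r(3) r(4)] by simp
      next
        case False
        then have "j' - 1 \<in> {1..k-1}" using j' nk by auto
        moreover have "Suc (j'-1) = j'" using j' False by auto
        ultimately have "f j' = sc k (f (j'-1))" using fw[of "j'-1"] by simp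
        have m1: "j' - 1 \<in> {1..k+1}" "j' - 1 \<noteq> k" using \<open>j' - 1 \<in> {1..k-1}\<close> by auto
        have "sc k (f (j'-1)) = sc k (f k)" using \<open>f j' = sc k (f (j'-1))\<close> j' by simp
        then have e: "f (j'-1) = f k" using scinj[OF fle[OF m1(1)] fle[OF r(3)]] by blast
        show False using finj[OF m1(1) r(3) e] m1(2) by blast
      qed
    qed
    have "f 2 = sc k (f 1)" using fw[of 1] k4 by (simp add: numeral_2_eq_2)
    moreover have "sc k (f k) = f (Suc k)" using j' j'k by simp
    moreover have "sc k (f (Suc k)) = f 1" using j j1 by simp
    ultimately have "bad k f (M3_Nb k)"
      using rot_bad[OF k4 r(3) r(4) r(1) r(2) fle[OF r(3)] fle[OF r(4)] fle[OF r(1)] fle[OF r(2)], of "M3_Nb k"] mem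
      by simp
    then show False using bb by blast
  next
    case False
    then have bw: "i \<in> {1..k-1} \<Longrightarrow> f i = sc k (f (Suc i))" for i using all st by blast
    obtain j where j: "j \<in> {1..k+1}" "f j = sc k (f (Suc k))" using surj scle fle r by blast
    have jk: "j = k"
    proof (rule ccontr)
      assume nk: "j \<noteq> k"
      show False
      proof (cases "j = Suc k")
        case True then show False using j scfix by metis
      next
        case False
        then have jj: "j \<in> {1..k-1}" using j nk by auto
        have sj: "Suc j \<in> {1..k+1}" using jj by auto
        have "sc k (f (Suc j)) = sc k (f (Suc k))" using bw[OF jj] j by simp
        then have "f (Suc j) = f (Suc k)" using scinj[OF fle[OF sj] fle[OF r(4)]] by blast
        then show False using finj[OF sj r(4)] nk by simp
      qed
    qed
    obtain j' where j': "j' \<in> {1..k+1}" "f j' = sc k (f 1)" using surj scle fle r by blast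
    have j'k: "j' = Suc k"
    proof (rule ccontr)
      assume nk: "j' \<noteq> Suc k"
      show False
      proof (cases "j' = k")
        case True
        then have "sc k (f 1) = sc k (f (Suc k))" using j' j jk by simp
        then have "f 1 = f (Suc k)" using scinj[OF fle[OF r(1)] fle[OF r(4)]] by blast
        then show False using finj[OF r(1) r(4)] using k4 by simp
      next
        case False
        then have jj: "j' \<in> {1..k-1}" using j' nk by auto
        have sj: "Suc j' \<in> {1..k+1}" using jj by auto
        have "sc k (f (Suc j')) = sc k (f 1)" using bw[OF jj] j' by simp
        then have "f (Suc j') = f 1" using scinj[OF fle[OF sj] fle[OF r(1)]] by blast
        then show False using finj[OF sj r(1)] using jj by simp
      qed
    qed
    have "f 1 = sc k (f 2)" using bw[of 1] k4 by (simp add: numeral_2_eq_2)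
    moreover have "sc k (f 1) = f (Suc k)" using j' j'k by simp
    moreover have "sc k (f (Suc k)) = f k" using j jk by simp
    ultimately have "bad k f (M3_Nb k)"
      using rot_bad[OF k4 r(2) r(1) r(4) r(3) fle[OF r(2)] fle[OF r(1)] fle[OF r(4)] fle[OF r(3)], of "M3_Nb k"] mem
      by simp
    then show False using bb by blast
  qed
qed



theorem lemma11:
  fixes k :: nat
  assumes "even k" and "k \<ge> 4"
  shows "\<not> word_representable (M3_V k) (M3_E k)"
proof
  assume "word_representable (M3_V k) (M3_E k)"
  then obtain w where wr: "word_represents (M3_V k) (M3_E k) w" unfolding word_representable_def by blast
  have k4: "k \<ge> 4" by fact
  let ?V = "M3_V k"
  let ?S = "C ` {1..k+1}"
  have setw: "set w = ?V" using wr unfolding word_represents_def by blast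
  have adj: "M3_E k x y \<longleftrightarrow> ltw w x y \<or> ltw w y x" if xy: "x \<in> ?V" "y \<in> ?V" "x \<noteq> y" for x y
  proof -
    have "\<forall>a\<in>?V. \<forall>b\<in>?V. a \<noteq> b \<longrightarrow> (M3_E k a b \<longleftrightarrow> alternate w a b)"
      using wr unfolding word_represents_def by (rule conjunct2)
    then have "M3_E k x y \<longleftrightarrow> alternate w x y" using xy by blast
    then show ?thesis using alt_char[OF xy(3)] by simp
  qed
  have SV: "?S \<subseteq> ?V" unfolding M3_V_def by auto
  have Cadj: "ltw w (C i) (C j) \<or> ltw w (C j) (C i)" if ij: "i \<in> {1..k+1}" "j \<in> {1..k+1}" "i \<noteq> j" for i j
  proof -
    have m: "C i \<in> ?V" "C j \<in> ?V" using SV ij by auto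
    then have "M3_E k (C i) (C j)" using ij(3) unfolding M3_E_def by simp
    then show ?thesis using adj[OF m] ij(3) by simp
  qed
  have Sadj: "ltw w x y \<or> ltw w y x" if xS: "x \<in> ?S" "y \<in> ?S" "x \<noteq> y" for x y
  proof -
    obtain i j where "i \<in> {1..k+1}" "j \<in> {1..k+1}" "x = C i" "y = C j" using xS(1,2) by blast
    then show ?thesis using Cadj[of i j] xS(3) by blast
  qed
  have nb: "\<not> (ltw w x y \<and> ltw w y x)" if "x \<in> ?V" "x \<noteq> y" for x y
  proof
    assume "ltw w x y \<and> ltw w y x"
    moreover have "x \<in> set w" using setw that(1) by simp
    ultimately show False using not_both[of x w y] that(2) by blast
  qed
  define pos where "pos x = card {z \<in> ?S. z \<noteq> x \<and> ltw w z x}" for x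
  define f where "f j = pos (C j)" for j
  have posmono: "x \<in> ?S \<Longrightarrow> y \<in> ?S \<Longrightarrow> x \<noteq> y \<Longrightarrow> ltw w x y \<Longrightarrow> pos x < pos y" for x y
  proof -
    assume x: "x \<in> ?S" and y: "y \<in> ?S" and xy: "x \<noteq> y" and l: "ltw w x y"
    have sub: "{z \<in> ?S. z \<noteq> x \<and> ltw w z x} \<subset> {z \<in> ?S. z \<noteq> y \<and> ltw w z y}"
    proof
      show "{z \<in> ?S. z \<noteq> x \<and> ltw w z x} \<subseteq> {z \<in> ?S. z \<noteq> y \<and> ltw w z y}"
      proof
        fix z assume z: "z \<in> {z \<in> ?S. z \<noteq> x \<and> ltw w z x}"
        have zy: "z \<noteq> y" using z l nb[of x y] SV x xy by auto
        then have "ltw w z y" using ltw_trans[of w z x y] z l Sadj[of z y] y by auto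
        then show "z \<in> {z \<in> ?S. z \<noteq> y \<and> ltw w z y}" using z zy by auto
      qed
      show "{z \<in> ?S. z \<noteq> x \<and> ltw w z x} \<noteq> {z \<in> ?S. z \<noteq> y \<and> ltw w z y}"
        using x xy l by auto
    qed
    then show "pos x < pos y" unfolding pos_def by (intro psubset_card_mono) auto
  qed
  have forder: "i \<in> {1..k+1} \<Longrightarrow> j \<in> {1..k+1} \<Longrightarrow> i \<noteq> j \<Longrightarrow> f i < f j \<longleftrightarrow> ltw w (C i) (C j)" for i j
  proof -
    assume ij: "i \<in> {1..k+1}" "j \<in> {1..k+1}" "i \<noteq> j"
    have m: "C i \<in> ?S" "C j \<in> ?S" "C i \<noteq> C j" "C j \<noteq> C i" using ij by auto
    show ?thesis
    proof
      assume "f i < f j"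
      then have "\<not> ltw w (C j) (C i)" using posmono[OF m(2) m(1) m(4)] unfolding f_def by auto
      then show "ltw w (C i) (C j)" using Cadj[OF ij] by blast
    next
      assume "ltw w (C i) (C j)"
      then show "f i < f j" using posmono[OF m(1) m(2) m(3)] unfolding f_def by auto
    qed
  qed
  have finj: "inj_on f {1..k+1}"
  proof (rule inj_onI)
    fix i j assume ij: "i \<in> {1..k+1}" "j \<in> {1..k+1}" "f i = f j"
    show "i = j"
    proof (rule ccontr)
      assume "i \<noteq> j"
      then have "f i < f j \<or> f j < f i" using forder[OF ij(1,2)] forder[OF ij(2,1)] Cadj[OF ij(1,2)] by auto
      then show False using ij(3) by simp
    qed
  qed
  have cardS: "card ?S = k + 1" by (simp add: card_image inj_on_def)
  have fle: "j \<in> {1..k+1} \<Longrightarrow> f j \<le> k" for j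
  proof -
    assume j: "j \<in> {1..k+1}"
    have "{z \<in> ?S. z \<noteq> C j \<and> ltw w z (C j)} \<subseteq> ?S - {C j}" by auto
    then have "card {z \<in> ?S. z \<noteq> C j \<and> ltw w z (C j)} \<le> card (?S - {C j})" by (intro card_mono) auto
    also have "\<dots> = k" using cardS j by simp
    finally show ?thesis unfolding f_def pos_def .
  qed
  have fim: "f ` {1..k+1} = {0..k}"
  proof (rule card_subset_eq)
    show "finite {0..k}" by simp
    show "f ` {1..k+1} \<subseteq> {0..k}" using fle by auto
    show "card (f ` {1..k+1}) = card {0..k}" using finj by (simp add: card_image)
  qed
  have indep: "\<not> bad k f N" if v: "v \<in> ?V" "v \<notin> ?S"
      and vN: "\<forall>j\<in>{1..k+1}. M3_E k v (C j) \<longleftrightarrow> j \<in> N" for v N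
  proof
    assume "bad k f N"
    then obtain i1 i2 i3 i4 where r: "i1 \<in> {1..k+1}" "i2 \<in> {1..k+1}" "i3 \<in> {1..k+1}" "i4 \<in> {1..k+1}"
      and o: "f i1 < f i2" "f i2 < f i3" "f i3 < f i4"
      and p: "(i1 \<in> N \<and> i3 \<in> N \<and> i2 \<notin> N \<and> i4 \<notin> N) \<or> (i1 \<notin> N \<and> i3 \<notin> N \<and> i2 \<in> N \<and> i4 \<in> N)"
      unfolding bad_def by blast
    have d: "i1 \<noteq> i2" "i2 \<noteq> i3" "i3 \<noteq> i4" "i1 \<noteq> i4" using o by auto
    have l1: "ltw w (C i1) (C i2)" using forder[OF r(1) r(2) d(1)] o by simp
    have l2: "ltw w (C i2) (C i3)" using forder[OF r(2) r(3) d(2)] o by simp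
    have l3: "ltw w (C i3) (C i4)" using forder[OF r(3) r(4) d(3)] o by simp
    have l4: "ltw w (C i1) (C i4)" using forder[OF r(1) r(4) d(4)] o by simp
    have e: "j \<in> N \<longleftrightarrow> ltw w v (C j) \<or> ltw w (C j) v" if j: "j \<in> {1..k+1}" for j
    proof -
      have "C j \<in> ?V" using SV j by auto
      moreover have "v \<noteq> C j" using v j by auto
      ultimately show ?thesis using vN j adj[of v "C j"] v(1) by simp
    qed
    have n: "\<not> (ltw w v (C j) \<and> ltw w (C j) v)" if j: "j \<in> {1..k+1}" for j
    proof -
      have "v \<noteq> C j" using v(2) j by auto
      then show ?thesis using nb[of v "C j"] v(1) by blast
    qed
    from p show False
    proof
      assume h: "i1 \<in> N \<and> i3 \<in> N \<and> i2 \<notin> N \<and> i4 \<notin> N"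
      have h1: "ltw w v (C i1) \<or> ltw w (C i1) v" using h e[OF r(1)] by simp
      have h3: "ltw w v (C i3) \<or> ltw w (C i3) v" using h e[OF r(3)] by simp
      have h2: "\<not>(ltw w v (C i2) \<or> ltw w (C i2) v)" using h e[OF r(2)] by simp
      have h4: "\<not>(ltw w v (C i4) \<or> ltw w (C i4) v)" using h e[OF r(4)] by simp
      show False by (rule pat1[OF l1 l2 l3 l4 h1 h3 h2 h4 n[OF r(1)]])
    next
      assume h: "i1 \<notin> N \<and> i3 \<notin> N \<and> i2 \<in> N \<and> i4 \<in> N"
      have h1: "\<not>(ltw w v (C i1) \<or> ltw w (C i1) v)" using h e[OF r(1)] by simp
      have h3: "\<not>(ltw w v (C i3) \<or> ltw w (C i3) v)" using h e[OF r(3)] by simp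
      have h2: "ltw w v (C i2) \<or> ltw w (C i2) v" using h e[OF r(2)] by simp
      have h4: "ltw w v (C i4) \<or> ltw w (C i4) v" using h e[OF r(4)] by simp
      show False by (rule pat2[OF l1 l2 l3 l4 h2 h4 h1 h3 n[OF r(2)]])
    qed
  qed
  have ai: "\<forall>i\<in>{1..k-1}. \<not> bad k f {i, Suc i}"
  proof
    fix i assume i: "i \<in> {1..k-1}"
    show "\<not> bad k f {i, Suc i}"
    proof (rule indep)
      show "A i \<in> ?V" using i unfolding M3_V_def by auto
      show "A i \<notin> ?S" by auto
      show "\<forall>j\<in>{1..k+1}. M3_E k (A i) (C j) \<longleftrightarrow> j \<in> {i, Suc i}"
        using i unfolding M3_E_def M3_V_def by auto
    qed
  qed
  have bb: "\<not> bad k f (M3_Nb k)"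
  proof (rule indep)
    show "B \<in> ?V" unfolding M3_V_def by auto
    show "B \<notin> ?S" by auto
    show "\<forall>j\<in>{1..k+1}. M3_E k B (C j) \<longleftrightarrow> j \<in> M3_Nb k"
      unfolding M3_E_def M3_V_def by (auto simp: M3_Nb_def)
  qed
  show False using comb[OF k4 finj fim ai bb] .
qed

end
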